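(* Assume $|B|<|B|_c$ and $\xi\in\mathbb{R}$ with $|\xi|>|\xi|^B_{vc}$, and let $\mathcal S=\{s>0:\alpha(s)<0\}$. Then there exists a unique $s\in\mathcal S$ such that, with $\lambda(|\xi|,s):=\sqrt{-\alpha(s)}>0$, one has $s=\lambda(|\xi|,s)$.
   Context: $g>0$, $\rho_+>\rho_->0$, $[\rho]=\rho_+-\rho_-$, $\mu_\pm>0$, $B\ne0$; $\rho,\mu$ equal $\rho_+,\mu_+$ on $(0,1)$ and $\rho_-,\mu_-$ on $(-1,0)$. For $s>0$ and $\psi\in H_0^2((-1,1))$: $E_s(\psi)=\frac12\int_{-1}^1\big[s\mu(4\xi^2|\psi'|^2+|\xi^2\psi+\psi''|^2)+|B|^2(\xi^2|\psi'|^2+|\psi''|^2)\big]dx_2-\frac12\xi^2g[\rho]\psi(0)^2$, $J(\psi)=\frac12\int_{-1}^1\rho(\xi^2|\psi|^2+|\psi'|^2)dx_2$, $\alpha(s)=\inf\{E_s(\psi):\psi\in H_0^2((-1,1)),J(\psi)=1\}$. $|B|_c^2:=\sup\{g[\rho]\psi(0)^2/\int_{-1}^1|\psi'|^2: 0\ne\psi\in H_0^1((-1,1))\}$; $(|\xi|^B_{vc})^2:=\inf\{|B|^2\int|\psi''|^2/(g[\rho]\psi(0)^2-|B|^2\int|\psi'|^2):\psi\in H_0^2((-1,1)),\ g[\rho]\psi(0)^2-|B|^2\int|\psi'|^2>0\}$. *)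

theory Defs
  imports "HOL-Analysis.Analysis"
begin

text \<open>One-dimensional Sobolev spaces on (-1,1), via absolutely continuous
representatives.\<close>

definition H01 :: "(real \<Rightarrow> real) \<Rightarrow> (real \<Rightarrow> real) \<Rightarrow> bool" where
  "H01 psi d1 \<longleftrightarrow>
     set_borel_measurable lborel {-1..1} d1 \<and>
     set_integrable lborel {-1..1} (\<lambda>x. (d1 x)\<^sup>2) \<and>
     (\<forall>x\<in>{-1..1}. psi x = (LBINT t:{-1..x}. d1 t)) \<and> psi 1 = 0"

definition H02 :: "(real \<Rightarrow> real) \<Rightarrow> (real \<Rightarrow> real) \<Rightarrow> (real \<Rightarrow> real) \<Rightarrow> bool" where
  "H02 psi d1 d2 \<longleftrightarrow> H01 d1 d2 \<and> H01 psi d1"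

definition pwc :: "real \<Rightarrow> real \<Rightarrow> real \<Rightarrow> real" where
  "pwc vp vm x = (if x > 0 then vp else vm)"

text \<open>Energy E_s; b stands for |B|.\<close>
definition Es :: "real \<Rightarrow> real \<Rightarrow> real \<Rightarrow> real \<Rightarrow> real \<Rightarrow> real \<Rightarrow> real \<Rightarrow> real
    \<Rightarrow> (real \<Rightarrow> real) \<Rightarrow> (real \<Rightarrow> real) \<Rightarrow> (real \<Rightarrow> real) \<Rightarrow> real" where
  "Es g rp rm mp mm b xi s psi d1 d2 =
     1/2 * (LBINT x:{-1..1}.
        s * pwc mp mm x * (4 * xi\<^sup>2 * (d1 x)\<^sup>2 + (xi\<^sup>2 * psi x + d2 x)\<^sup>2)
        + b\<^sup>2 * (xi\<^sup>2 * (d1 x)\<^sup>2 + (d2 x)\<^sup>2))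
     - 1/2 * xi\<^sup>2 * g * (rp - rm) * (psi 0)\<^sup>2"

definition Jf :: "real \<Rightarrow> real \<Rightarrow> real \<Rightarrow> (real \<Rightarrow> real) \<Rightarrow> (real \<Rightarrow> real) \<Rightarrow> real" where
  "Jf rp rm xi psi d1 =
     1/2 * (LBINT x:{-1..1}. pwc rp rm x * (xi\<^sup>2 * (psi x)\<^sup>2 + (d1 x)\<^sup>2))"

definition alpha :: "real \<Rightarrow> real \<Rightarrow> real \<Rightarrow> real \<Rightarrow> real \<Rightarrow> real \<Rightarrow> real \<Rightarrow> real \<Rightarrow> real" where
  "alpha g rp rm mp mm b xi s =
     Inf {Es g rp rm mp mm b xi s psi d1 d2 | psi d1 d2.
            H02 psi d1 d2 \<and> Jf rp rm xi psi d1 = 1}"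

definition Bc2 :: "real \<Rightarrow> real \<Rightarrow> real \<Rightarrow> real" where
  "Bc2 g rp rm =
     Sup {g * (rp - rm) * (psi 0)\<^sup>2 / (LBINT x:{-1..1}. (d1 x)\<^sup>2) | psi d1.
            H01 psi d1 \<and> (\<exists>x\<in>{-1<..<1}. psi x \<noteq> 0)}"

definition xivc2 :: "real \<Rightarrow> real \<Rightarrow> real \<Rightarrow> real \<Rightarrow> real" where
  "xivc2 g rp rm b =
     Inf {b\<^sup>2 * (LBINT x:{-1..1}. (d2 x)\<^sup>2) /
            (g * (rp - rm) * (psi 0)\<^sup>2 - b\<^sup>2 * (LBINT x:{-1..1}. (d1 x)\<^sup>2)) | psi d1 d2.
            H02 psi d1 d2 \<and>
            g * (rp - rm) * (psi 0)\<^sup>2 - b\<^sup>2 * (LBINT x:{-1..1}. (d1 x)\<^sup>2) > 0}"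

end

theory Submission imports Defs begin

lemma set_integrable_const_Icc: "set_integrable lborel {a..b::real} (\<lambda>_. c::real)"
  unfolding set_integrable_def by (rule borel_integrable_compact) auto

lemma abs_le_1_sq: "\<bar>d::real\<bar> \<le> 1 + d^2"
proof (cases "\<bar>d\<bar> \<le> 1")
  case True then show ?thesis by (simp add: add_increasing2)
next
  case False
  then have "\<bar>d\<bar> * 1 \<le> \<bar>d\<bar> * \<bar>d\<bar>" by (intro mult_left_mono) auto
  then show ?thesis by (simp add: power2_eq_square abs_mult[symmetric])
qed

lemma H01_facts:
  assumes "H01 psi d1"
  shows "set_integrable lborel {-1..1} d1"
    and "set_integrable lborel {-1..1} (\<lambda>x. (d1 x)^2)"
    and "set_borel_measurable lborel {-1..1} d1"
    and "\<And>x. x\<in>{-1..1} \<Longrightarrow> psi x = integral {-1..x} d1"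
    and "psi 1 = 0"
proof -
  have m: "set_borel_measurable lborel {-1..1} d1" and sq: "set_integrable lborel {-1..1} (\<lambda>x. (d1 x)^2)"
    and ps: "\<forall>x\<in>{-1..1}. psi x = (LBINT t:{-1..x}. d1 t)" and p1: "psi 1 = 0"
    using assms unfolding H01_def by auto
  have "set_integrable lborel {-1..1} (\<lambda>x. 1 + (d1 x)^2)"
    using set_integral_add(1)[OF set_integrable_const_Icc sq] by simp
  then show i: "set_integrable lborel {-1..1} d1"
    by (rule set_integrable_bound[OF _ m]) (auto intro!: AE_I2 abs_le_1_sq)
  show "set_integrable lborel {-1..1} (\<lambda>x. (d1 x)^2)" by fact
  show "set_borel_measurable lborel {-1..1} d1" by fact
  show "psi 1 = 0" by fact
  fix x :: real assume x: "x \<in> {-1..1}"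
  have "set_integrable lborel {-1..x} d1"
    by (rule set_integrable_subset[OF i]) (use x in auto)
  then show "psi x = integral {-1..x} d1"
    using ps x set_borel_integral_eq_integral(2) by metis
qed

lemma CS_unit:
  fixes f :: "real \<Rightarrow> real"
  assumes "f integrable_on {a..b}" "(\<lambda>x. (f x)^2) integrable_on {a..b}" "b - a = 1"
  shows "(integral {a..b} f)^2 \<le> integral {a..b} (\<lambda>x. (f x)^2)"
proof -
  define c where "c = integral {a..b} f"
  have h1: "((\<lambda>x. (f x)^2) has_integral integral {a..b} (\<lambda>x. (f x)^2)) {a..b}"
    using assms(2) by (simp add: has_integral_integral)
  have h2: "((\<lambda>x. 2 * c * f x) has_integral 2 * c * c) {a..b}"
    using has_integral_mult_right[OF assms(1)[unfolded has_integral_integral]] by (simp add: c_def)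
  have h3: "((\<lambda>x. c^2) has_integral c^2) {a..b}"
    using has_integral_const_real[of "c^2" a b] assms(3) by simp
  have "((\<lambda>x. (f x)^2 - 2 * c * f x + c^2) has_integral
      (integral {a..b} (\<lambda>x. (f x)^2) - 2*c*c + c^2)) {a..b}"
    by (intro has_integral_add has_integral_diff h1 h2 h3)
  moreover have "\<And>x. (f x)^2 - 2 * c * f x + c^2 = (f x - c)^2"
    by (simp add: power2_eq_square algebra_simps)
  ultimately have "((\<lambda>x. (f x - c)^2) has_integral
      (integral {a..b} (\<lambda>x. (f x)^2) - 2*c*c + c^2)) {a..b}" by simp
  then have "0 \<le> integral {a..b} (\<lambda>x. (f x)^2) - 2*c*c + c^2"
    by (rule has_integral_nonneg) auto
  then show ?thesis by (simp add: c_def power2_eq_square)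
qed

lemma H01_HK:
  assumes "H01 psi d1" "-1 \<le> a" "a \<le> b" "b \<le> 1"
  shows "d1 integrable_on {a..b}" "(\<lambda>x. (d1 x)^2) integrable_on {a..b}"
proof -
  have "d1 integrable_on {-1..1}" "(\<lambda>x. (d1 x)^2) integrable_on {-1..1}"
    using set_borel_integral_eq_integral(1) H01_facts(1,2)[OF assms(1)] by blast+
  then show "d1 integrable_on {a..b}" "(\<lambda>x. (d1 x)^2) integrable_on {a..b}"
    using integrable_on_subinterval assms(2-4) by (metis atLeastatMost_subset_iff)+
qed

lemma H01_sq_eq:
  assumes "H01 psi d1"
  shows "(LBINT x:{-1..1}. (d1 x)^2) = integral {-1..1} (\<lambda>x. (d1 x)^2)"
  using set_borel_integral_eq_integral(2) H01_facts(2)[OF assms] by blast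

lemma H01_psi0:
  assumes "H01 psi d1"
  shows "2 * (psi 0)^2 \<le> (LBINT x:{-1..1}. (d1 x)^2)"
    and "(psi 0)^2 \<le> (LBINT x:{-1..1}. (d1 x)^2)"
proof -
  have p0: "psi 0 = integral {-1..0} d1" using H01_facts(4)[OF assms, of 0] by simp
  have "psi 1 = integral {-1..1} d1" using H01_facts(4)[OF assms, of 1] by simp
  then have "integral {-1..1} d1 = 0" using H01_facts(5)[OF assms] by simp
  moreover have "integral {-1..0} d1 + integral {0..1} d1 = integral {-1..1} d1"
    by (rule Henstock_Kurzweil_Integration.integral_combine) (use H01_HK[OF assms, of "-1" 1] in auto)
  ultimately have p0': "psi 0 = - integral {0..1} d1" using p0 by simp
  have c1: "(psi 0)^2 \<le> integral {-1..0} (\<lambda>x. (d1 x)^2)"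
    unfolding p0 by (rule CS_unit) (use H01_HK[OF assms, of "-1" 0] in auto)
  have c2: "(psi 0)^2 \<le> integral {0..1} (\<lambda>x. (d1 x)^2)"
    unfolding p0' power2_minus by (rule CS_unit) (use H01_HK[OF assms, of 0 1] in auto)
  have s: "integral {-1..0} (\<lambda>x. (d1 x)^2) + integral {0..1} (\<lambda>x. (d1 x)^2) = integral {-1..1} (\<lambda>x. (d1 x)^2)"
    by (rule Henstock_Kurzweil_Integration.integral_combine) (use H01_HK[OF assms, of "-1" 1] in auto)
  have n1: "0 \<le> integral {-1..0} (\<lambda>x. (d1 x)^2)" "0 \<le> integral {0..1} (\<lambda>x. (d1 x)^2)"
    by (intro integral_nonneg; use H01_HK[OF assms] in force)+
  show "2 * (psi 0)^2 \<le> (LBINT x:{-1..1}. (d1 x)^2)"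
    using c1 c2 s H01_sq_eq[OF assms] by linarith
  show "(psi 0)^2 \<le> (LBINT x:{-1..1}. (d1 x)^2)"
    using c1 c2 s n1 H01_sq_eq[OF assms] by linarith
qed


lemma smeas_iff:
  "set_borel_measurable lborel {-1..1::real} f \<longleftrightarrow> (f::real\<Rightarrow>real) \<in> borel_measurable (restrict_space lborel {-1..1})"
  unfolding set_borel_measurable_def by (subst borel_measurable_restrict_space_iff) auto

lemma pwc_meas: "pwc a b \<in> borel_measurable (restrict_space lborel {-1..1})"
proof -
  have "pwc a b \<in> borel_measurable borel" unfolding pwc_def by measurable
  then show ?thesis by (simp add: measurable_restrict_space1)
qed

lemma test:
  assumes [measurable]: "f \<in> borel_measurable (restrict_space lborel {-1..1})"
     "g \<in> borel_measurable (restrict_space lborel {-1..1})"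
  shows "(\<lambda>x. pwc a b x * (c * (f x)^2 + (d * g x + f x)^2)) \<in> borel_measurable (restrict_space lborel {-1..1})"
  using pwc_meas[measurable] by measurable


lemma set_integral_nonneg':
  fixes f :: "real \<Rightarrow> real"
  assumes "\<And>x. x \<in> A \<Longrightarrow> 0 \<le> f x"
  shows "0 \<le> (LBINT x:A. f x)"
  unfolding set_lebesgue_integral_def
  by (rule integral_nonneg_AE) (auto intro!: AE_I2 simp: assms indicator_def)

lemma H01_cont: assumes "H01 psi d1" shows "continuous_on {-1..1} psi"
proof -
  have "d1 integrable_on {-1..1}" using H01_HK[OF assms, of "-1" 1] by auto
  then have "continuous_on {-1..1} (\<lambda>x. integral {-1..x} d1)" by (rule indefinite_integral_continuous_1)
  then show ?thesis by (rule continuous_on_cong[THEN iffD1, rotated 2]) (auto simp: H01_facts(4)[OF assms])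
qed

lemma cont_meas:
  assumes "continuous_on {-1..1} (f::real\<Rightarrow>real)"
  shows "f \<in> borel_measurable (restrict_space lborel {-1..1})"
proof -
  have "(\<lambda>x. indicator {-1..1} x *\<^sub>R f x) \<in> borel_measurable borel"
    by (rule borel_measurable_continuous_on_indicator) (use assms in auto)
  then show ?thesis unfolding smeas_iff[symmetric] set_borel_measurable_def by simp
qed

lemma cont_sint:
  assumes "continuous_on {-1..1} (f::real\<Rightarrow>real)"
  shows "set_integrable lborel {-1..1} f"
  unfolding set_integrable_def by (rule borel_integrable_compact) (use assms in auto)

lemma sint_bound:
  assumes "set_integrable lborel {-1..1} f" "g \<in> borel_measurable (restrict_space lborel {-1..1})"
    "\<And>x. x \<in> {-1..1} \<Longrightarrow> \<bar>g x\<bar> \<le> (f x::real)"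
  shows "set_integrable lborel {-1..1} (g::real\<Rightarrow>real)"
  by (rule set_integrable_bound[OF assms(1)]) (use assms(2,3) smeas_iff in \<open>auto intro!: AE_I2 intro: order_trans[OF _ abs_ge_self]\<close>)

lemma pwc_abs: "\<bar>pwc a b x\<bar> \<le> \<bar>a\<bar> + \<bar>b\<bar>"
  by (auto simp: pwc_def)

lemma pwc_pos: "0 < a \<Longrightarrow> 0 < b \<Longrightarrow> 0 < pwc a b x"
  by (auto simp: pwc_def)

lemma pwc_ge: "b < a \<Longrightarrow> b \<le> pwc a b x"
  by (auto simp: pwc_def)

lemma sq_sum_le: "(u + v)^2 \<le> 2*u^2 + 2*(v::real)^2"
proof -
  have "0 \<le> (u - v)^2" by simp
  then show ?thesis by (simp add: power2_eq_square algebra_simps)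
qed

lemma pwc_mult_sint:
  assumes "set_integrable lborel {-1..1} f" "f \<in> borel_measurable (restrict_space lborel {-1..1})"
  shows "set_integrable lborel {-1..1} (\<lambda>x. pwc a b x * f x)"
proof (rule sint_bound[of "\<lambda>x. (\<bar>a\<bar> + \<bar>b\<bar>) * \<bar>f x\<bar>"])
  show "set_integrable lborel {-1..1} (\<lambda>x. (\<bar>a\<bar> + \<bar>b\<bar>) * \<bar>f x\<bar>)"
    using set_integrable_abs[OF assms(1)] by (intro set_integrable_mult_right) auto
  show "(\<lambda>x. pwc a b x * f x) \<in> borel_measurable (restrict_space lborel {-1..1})"
    using pwc_meas[measurable] assms(2)[measurable] by measurable
  fix x show "\<bar>pwc a b x * f x\<bar> \<le> (\<bar>a\<bar> + \<bar>b\<bar>) * \<bar>f x\<bar>"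
    unfolding abs_mult by (rule mult_right_mono[OF pwc_abs]) auto
qed

lemma H02_ints:
  assumes "H02 psi d1 d2"
  shows "set_integrable lborel {-1..1} (\<lambda>x. pwc a b x * (4*xi^2*(d1 x)^2 + (xi^2*psi x + d2 x)^2))"
    and "set_integrable lborel {-1..1} (\<lambda>x. c * (xi^2*(d1 x)^2 + (d2 x)^2))"
    and "set_integrable lborel {-1..1} (\<lambda>x. pwc a b x * (xi^2*(psi x)^2 + (d1 x)^2))"
    and "set_integrable lborel {-1..1} (\<lambda>x. (d1 x)^2)"
proof -
  have h1: "H01 psi d1" and h2: "H01 d1 d2" using assms by (auto simp: H02_def)
  have i1: "set_integrable lborel {-1..1} (\<lambda>x. (d1 x)^2)" using H01_facts(2)[OF h1] .
  have i2: "set_integrable lborel {-1..1} (\<lambda>x. (d2 x)^2)" using H01_facts(2)[OF h2] .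
  have [measurable]: "psi \<in> borel_measurable (restrict_space lborel {-1..1})"
    by (rule cont_meas[OF H01_cont[OF h1]])
  have [measurable]: "d1 \<in> borel_measurable (restrict_space lborel {-1..1})"
    using H01_facts(3)[OF h1] smeas_iff by blast
  have [measurable]: "d2 \<in> borel_measurable (restrict_space lborel {-1..1})"
    using H01_facts(3)[OF h2] smeas_iff by blast
  have i0: "set_integrable lborel {-1..1} (\<lambda>x. (psi x)^2)"
    by (rule cont_sint) (intro continuous_intros H01_cont[OF h1])
  show "set_integrable lborel {-1..1} (\<lambda>x. (d1 x)^2)" by fact
  show "set_integrable lborel {-1..1} (\<lambda>x. c * (xi^2*(d1 x)^2 + (d2 x)^2))"
    using i1 i2 by (intro set_integrable_mult_right set_integral_add(1)) auto
  have j: "set_integrable lborel {-1..1} (\<lambda>x. xi^2*(psi x)^2 + (d1 x)^2)"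
    using i0 i1 by (intro set_integral_add(1)) auto
  show "set_integrable lborel {-1..1} (\<lambda>x. pwc a b x * (xi^2*(psi x)^2 + (d1 x)^2))"
    by (rule pwc_mult_sint[OF j]) measurable
  have k0: "set_integrable lborel {-1..1} (\<lambda>x. 4*xi^2*(d1 x)^2 + (2 * (xi^2)^2 * (psi x)^2 + 2 * (d2 x)^2))"
    using i0 i1 i2 by (intro set_integral_add(1) set_integrable_mult_right) auto
  have k: "set_integrable lborel {-1..1} (\<lambda>x. 4*xi^2*(d1 x)^2 + (xi^2*psi x + d2 x)^2)"
  proof (rule sint_bound[OF k0])
    show "(\<lambda>x. 4*xi^2*(d1 x)^2 + (xi^2*psi x + d2 x)^2) \<in> borel_measurable (restrict_space lborel {-1..1})"
      by measurable
    fix x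
    have "(xi^2*psi x + d2 x)^2 \<le> 2 * (xi^2*psi x)^2 + 2 * (d2 x)^2" by (rule sq_sum_le)
    then show "\<bar>4*xi^2*(d1 x)^2 + (xi^2*psi x + d2 x)^2\<bar> \<le> 4*xi^2*(d1 x)^2 + (2 * (xi^2)^2 * (psi x)^2 + 2 * (d2 x)^2)"
      by (simp add: power_mult_distrib)
  qed
  show "set_integrable lborel {-1..1} (\<lambda>x. pwc a b x * (4*xi^2*(d1 x)^2 + (xi^2*psi x + d2 x)^2))"
    by (rule pwc_mult_sint[OF k]) measurable
qed


definition Acoef :: "real \<Rightarrow> real \<Rightarrow> real \<Rightarrow> (real \<Rightarrow> real) \<Rightarrow> (real \<Rightarrow> real) \<Rightarrow> (real \<Rightarrow> real) \<Rightarrow> real" where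
  "Acoef mp mm xi psi d1 d2 = 1/2 * (LBINT x:{-1..1}. pwc mp mm x * (4 * xi\<^sup>2 * (d1 x)\<^sup>2 + (xi\<^sup>2 * psi x + d2 x)\<^sup>2))"

definition E0 :: "real \<Rightarrow> real \<Rightarrow> real \<Rightarrow> real \<Rightarrow> real \<Rightarrow> (real \<Rightarrow> real) \<Rightarrow> (real \<Rightarrow> real) \<Rightarrow> (real \<Rightarrow> real) \<Rightarrow> real" where
  "E0 g rp rm b xi psi d1 d2 = 1/2 * (LBINT x:{-1..1}. b\<^sup>2 * (xi\<^sup>2 * (d1 x)\<^sup>2 + (d2 x)\<^sup>2))
     - 1/2 * xi\<^sup>2 * g * (rp - rm) * (psi 0)\<^sup>2"

lemma aux2: "I = s * A + B \<Longrightarrow> (a::real) * I - k = s * (a * A) + (a * B - k)"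
  by (simp add: algebra_simps)

lemma aux1: "(\<lambda>x. F x) = (\<lambda>x. c^2 * G x) \<Longrightarrow>
   (a::real) * (LBINT x:S. F x) - k * (c*p)^2 = c^2 * (a * (LBINT x:S. G x) - k * p^2)"
  by (simp add: algebra_simps power_mult_distrib)

lemma Es_affine:
  assumes "H02 psi d1 d2"
  shows "Es g rp rm mp mm b xi s psi d1 d2 = s * Acoef mp mm xi psi d1 d2 + E0 g rp rm b xi psi d1 d2"
proof -
  have eq: "(\<lambda>x. s * pwc mp mm x * (4 * xi\<^sup>2 * (d1 x)\<^sup>2 + (xi\<^sup>2 * psi x + d2 x)\<^sup>2)
        + b\<^sup>2 * (xi\<^sup>2 * (d1 x)\<^sup>2 + (d2 x)\<^sup>2))
      = (\<lambda>x. s * (pwc mp mm x * (4 * xi\<^sup>2 * (d1 x)\<^sup>2 + (xi\<^sup>2 * psi x + d2 x)\<^sup>2))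
        + b\<^sup>2 * (xi\<^sup>2 * (d1 x)\<^sup>2 + (d2 x)\<^sup>2))" by (simp add: mult.assoc)
  have "(LBINT x:{-1..1}. s * (pwc mp mm x * (4 * xi\<^sup>2 * (d1 x)\<^sup>2 + (xi\<^sup>2 * psi x + d2 x)\<^sup>2))
        + b\<^sup>2 * (xi\<^sup>2 * (d1 x)\<^sup>2 + (d2 x)\<^sup>2))
     = (LBINT x:{-1..1}. s * (pwc mp mm x * (4 * xi\<^sup>2 * (d1 x)\<^sup>2 + (xi\<^sup>2 * psi x + d2 x)\<^sup>2)))
       + (LBINT x:{-1..1}. b\<^sup>2 * (xi\<^sup>2 * (d1 x)\<^sup>2 + (d2 x)\<^sup>2))"
    by (rule set_integral_add(2)) (use H02_ints[OF assms] in auto)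
  then show ?thesis unfolding Es_def Acoef_def E0_def eq set_integral_mult_right by (rule aux2)
qed

lemma Acoef_nonneg: "0 < mp \<Longrightarrow> 0 < mm \<Longrightarrow> 0 \<le> Acoef mp mm xi psi d1 d2"
  unfolding Acoef_def by (auto intro!: set_integral_nonneg' mult_nonneg_nonneg less_imp_le[OF pwc_pos])

lemma J_d1:
  assumes "H02 psi d1 d2" "0 < rm" "rm < rp"
  shows "rm * (LBINT x:{-1..1}. (d1 x)^2) \<le> 2 * Jf rp rm xi psi d1"
proof -
  have "(LBINT x:{-1..1}. rm * (d1 x)^2) \<le> (LBINT x:{-1..1}. pwc rp rm x * (xi^2*(psi x)^2 + (d1 x)^2))"
  proof (rule set_integral_mono)
    show "set_integrable lborel {-1..1} (\<lambda>x. rm * (d1 x)^2)" using H02_ints(4)[OF assms(1)] by auto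
    show "set_integrable lborel {-1..1} (\<lambda>x. pwc rp rm x * (xi^2*(psi x)^2 + (d1 x)^2))" using H02_ints(3)[OF assms(1)] by auto
    fix x
    have "rm * (d1 x)^2 \<le> pwc rp rm x * (d1 x)^2" by (rule mult_right_mono[OF pwc_ge[OF assms(3)]]) auto
    also have "\<dots> \<le> pwc rp rm x * (xi^2*(psi x)^2 + (d1 x)^2)"
      by (rule mult_left_mono) (use pwc_pos[of rp rm x] assms in auto)
    finally show "rm * (d1 x)^2 \<le> pwc rp rm x * (xi^2*(psi x)^2 + (d1 x)^2)" .
  qed
  then show ?thesis unfolding Jf_def by simp
qed

lemma Es_lower:
  assumes "H02 psi d1 d2" "g > 0" "0 < rm" "rm < rp" "0 < mp" "0 < mm" "0 \<le> s"
    "Jf rp rm xi psi d1 = 1"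
  shows "- (xi^2 * g * (rp - rm) / rm) \<le> Es g rp rm mp mm b xi s psi d1 d2"
proof -
  have h1: "H01 psi d1" using assms(1) by (simp add: H02_def)
  have "rm * (LBINT x:{-1..1}. (d1 x)^2) \<le> 2" using J_d1[OF assms(1,3,4), of xi] assms(8) by simp
  then have "rm * (psi 0)^2 \<le> 2" using H01_psi0(2)[OF h1] assms(3)
    by (meson mult_left_mono less_imp_le order_trans)
  then have p: "(psi 0)^2 \<le> 2 / rm" using assms(3) by (simp add: field_simps)
  have "0 \<le> xi^2 * g * (rp - rm)" using assms by auto
  then have q: "xi^2 * g * (rp - rm) * (psi 0)^2 \<le> xi^2 * g * (rp - rm) * (2 / rm)"
    by (rule mult_left_mono[OF p])
  have "0 \<le> (LBINT x:{-1..1}. s * pwc mp mm x * (4 * xi\<^sup>2 * (d1 x)\<^sup>2 + (xi\<^sup>2 * psi x + d2 x)\<^sup>2)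
        + b\<^sup>2 * (xi\<^sup>2 * (d1 x)\<^sup>2 + (d2 x)\<^sup>2))"
    by (intro set_integral_nonneg' add_nonneg_nonneg mult_nonneg_nonneg less_imp_le[OF pwc_pos])
       (use assms in auto)
  then show ?thesis unfolding Es_def using q by (simp add: field_simps)
qed

lemma H01_scale:
  assumes "H01 psi d1"
  shows "H01 (\<lambda>x. c * psi x) (\<lambda>x. c * d1 x)"
proof -
  have [measurable]: "d1 \<in> borel_measurable (restrict_space lborel {-1..1})"
    using H01_facts(3)[OF assms] smeas_iff by blast
  have "(\<lambda>x. c * d1 x) \<in> borel_measurable (restrict_space lborel {-1..1})" by measurable
  moreover have "set_integrable lborel {-1..1} (\<lambda>x. c^2 * (d1 x)^2)"
    using H01_facts(2)[OF assms] by auto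
  ultimately show ?thesis using assms unfolding H01_def smeas_iff
    by (simp add: power_mult_distrib)
qed

lemma H02_scale: "H02 psi d1 d2 \<Longrightarrow> H02 (\<lambda>x. c * psi x) (\<lambda>x. c * d1 x) (\<lambda>x. c * d2 x)"
  unfolding H02_def using H01_scale by blast

lemma Es_scale:
  "Es g rp rm mp mm b xi s (\<lambda>x. c * psi x) (\<lambda>x. c * d1 x) (\<lambda>x. c * d2 x)
     = c^2 * Es g rp rm mp mm b xi s psi d1 d2"
proof -
  have "(\<lambda>x. s * pwc mp mm x * (4 * xi\<^sup>2 * (c * d1 x)\<^sup>2 + (xi\<^sup>2 * (c * psi x) + c * d2 x)\<^sup>2)
        + b\<^sup>2 * (xi\<^sup>2 * (c * d1 x)\<^sup>2 + (c * d2 x)\<^sup>2))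
     = (\<lambda>x. c^2 * (s * pwc mp mm x * (4 * xi\<^sup>2 * (d1 x)\<^sup>2 + (xi\<^sup>2 * psi x + d2 x)\<^sup>2)
        + b\<^sup>2 * (xi\<^sup>2 * (d1 x)\<^sup>2 + (d2 x)\<^sup>2)))"
    by (rule ext) (simp add: power2_eq_square algebra_simps)
  then show ?thesis unfolding Es_def set_integral_mult_right by (rule aux1)
qed

lemma Jf_scale:
  "Jf rp rm xi (\<lambda>x. c * psi x) (\<lambda>x. c * d1 x) = c^2 * Jf rp rm xi psi d1"
proof -
  have "(\<lambda>x. pwc rp rm x * (xi\<^sup>2 * (c * psi x)\<^sup>2 + (c * d1 x)\<^sup>2))
     = (\<lambda>x. c^2 * (pwc rp rm x * (xi\<^sup>2 * (psi x)\<^sup>2 + (d1 x)\<^sup>2)))"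
    by (rule ext) (simp add: power2_eq_square algebra_simps)
  then show ?thesis unfolding Jf_def by simp
qed

lemma Jf_pos:
  assumes "H02 psi d1 d2" "0 < rm" "rm < rp" "psi 0 \<noteq> 0"
  shows "0 < Jf rp rm xi psi d1"
proof -
  have h1: "H01 psi d1" using assms(1) by (simp add: H02_def)
  have "0 < (psi 0)^2" using assms(4) by simp
  also have "\<dots> \<le> (LBINT x:{-1..1}. (d1 x)^2)" by (rule H01_psi0(2)[OF h1])
  finally have "0 < rm * (LBINT x:{-1..1}. (d1 x)^2)" using assms(2) by simp
  then show ?thesis using J_d1[OF assms(1-3), of xi] by linarith
qed


lemma abstract_main:
  fixes F :: "'t \<Rightarrow> real \<Rightarrow> real" and M :: "'t set" and al :: "real \<Rightarrow> real"
  assumes al: "\<And>s. s > 0 \<Longrightarrow> al s = Inf ((\<lambda>T. F T s) ` M)"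
    and aff: "\<And>T. T \<in> M \<Longrightarrow> \<exists>A E. A \<ge> 0 \<and> (\<forall>s. F T s = s * A + E)"
    and low: "\<And>T s. T \<in> M \<Longrightarrow> s > 0 \<Longrightarrow> - K \<le> F T s"
    and wM: "Tw \<in> M" and wF: "\<And>s. F Tw s = s * Aw + Ew" and wA: "Aw \<ge> 0" and wE: "Ew < 0"
  shows "\<exists>!s. s \<in> {s. s > 0 \<and> al s < 0} \<and> s = sqrt (- al s)"
proof -
  have ne: "M \<noteq> {}" using wM by auto
  have bdd: "bdd_below ((\<lambda>T. F T s) ` M)" if "s > 0" for s
    using low that by (auto intro!: bdd_belowI[where m="-K"])
  have al_le: "al s \<le> F T s" if "s > 0" "T \<in> M" for s T
    unfolding al[OF that(1)] by (rule cInf_lower) (use that bdd in auto)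
  have al_ge: "y \<le> al s" if "s > 0" "\<And>T. T \<in> M \<Longrightarrow> y \<le> F T s" for s y
    unfolding al[OF that(1)] by (rule cInf_greatest) (use ne that in auto)
  have Kal: "- K \<le> al s" if "s > 0" for s using al_ge[OF that] low that by blast
  have mono: "al s \<le> al t" if "0 < s" "s \<le> t" for s t
  proof (rule al_ge)
    show "0 < t" using that by simp
    fix T assume T: "T \<in> M"
    then obtain A E where "A \<ge> 0" "\<forall>s. F T s = s * A + E" using aff by blast
    then have "F T s \<le> F T t" using that by (simp add: mult_right_mono)
    then show "al s \<le> F T t" using al_le[OF that(1) T] by simp
  qed
  have conv: "convex_on {0<..} (\<lambda>s. - al s)"
  proof (rule convex_onI)
    show "convex {0::real<..}" by simp
    fix t x y :: real assume t: "t > 0" "t < 1" and xy: "x \<in> {0<..}" "y \<in> {0<..}"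
    have pos: "0 < (1 - t) *\<^sub>R x + t *\<^sub>R y" using t xy by (simp add: add_pos_pos)
    have "(1 - t) * al x + t * al y \<le> al ((1 - t) *\<^sub>R x + t *\<^sub>R y)"
    proof (rule al_ge[OF pos])
      fix T assume T: "T \<in> M"
      then obtain A E where "\<forall>s. F T s = s * A + E" using aff by blast
      then have e: "F T ((1 - t) *\<^sub>R x + t *\<^sub>R y) = (1 - t) * F T x + t * F T y"
        by (simp add: algebra_simps)
      have "(1 - t) * al x \<le> (1 - t) * F T x"
        by (rule mult_left_mono) (use al_le T xy t in auto)
      moreover have "t * al y \<le> t * F T y"
        by (rule mult_left_mono) (use al_le T xy t in auto)
      ultimately show "(1 - t) * al x + t * al y \<le> F T ((1 - t) *\<^sub>R x + t *\<^sub>R y)"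
        unfolding e by simp
    qed
    then show "- al ((1 - t) *\<^sub>R x + t *\<^sub>R y) \<le> (1 - t) * - al x + t * - al y" by simp
  qed
  have "continuous_on {0<..} (\<lambda>s. - al s)"
    by (rule convex_on_continuous[OF _ conv]) simp
  then have cont: "continuous_on {0<..} al"
    using continuous_on_minus by fastforce
  define f where "f s = s^2 + al s" for s
  define s0 where "s0 = min 1 (- Ew / (2 * (Aw + 1)))"
  have s0p: "0 < s0" "s0 \<le> 1" using wE wA by (auto simp: s0_def divide_neg_pos)
  have "s0 * (Aw + 1) \<le> - Ew / (2 * (Aw + 1)) * (Aw + 1)"
    by (rule mult_right_mono) (use wA in \<open>auto simp: s0_def\<close>)
  also have "\<dots> = - Ew / 2" using wA by (simp add: field_simps)
  finally have s0b: "s0 * (Aw + 1) \<le> - Ew / 2" .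
  have "s0^2 \<le> s0" using s0p by (simp add: power2_eq_square mult_left_le_one_le)
  then have f0: "f s0 < 0" unfolding f_def using al_le[OF s0p(1) wM] wF[of s0] s0b wE
    by (simp add: algebra_simps)
  define s1 where "s1 = \<bar>K\<bar> + 1"
  have s1p: "1 \<le> s1" "0 < s1" by (auto simp: s1_def)
  have "s1 \<le> s1^2" using s1p by (simp add: power2_eq_square)
  then have f1: "0 < f s1" unfolding f_def using Kal[OF s1p(2)] by (simp add: s1_def)
  have cf: "continuous_on {s0..s1} f" unfolding f_def
    by (intro continuous_intros continuous_on_subset[OF cont]) (use s0p in auto)
  obtain s where s: "s0 \<le> s" "s \<le> s1" "f s = 0"
    using IVT'[of f s0 0 s1] f0 f1 cf s0p s1p by force
  have sp: "0 < s" using s s0p by simp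
  have als: "al s = -(s^2)" using s(3) unfolding f_def by simp
  show ?thesis
  proof (rule ex1I[of _ s])
    show "s \<in> {s. s > 0 \<and> al s < 0} \<and> s = sqrt (- al s)" using sp als by simp
    fix t assume t: "t \<in> {s. s > 0 \<and> al s < 0} \<and> t = sqrt (- al t)"
    then have tp: "t > 0" and neg: "al t < 0" and teq: "t = sqrt (- al t)" by auto
    have "t^2 = (sqrt (- al t))^2" using teq by simp
    also have "\<dots> = - al t" using neg by (intro real_sqrt_pow2) simp
    finally have alt: "al t = -(t^2)" by simp
    show "t = s"
    proof (rule ccontr)
      assume "t \<noteq> s"
      then consider "t < s" | "s < t" by linarith
      then show False
      proof cases
        case 1 then have "al t \<le> al s" using mono tp by simp
        moreover have "t^2 < s^2" using 1 tp by (simp add: power_strict_mono)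
        ultimately show False using als alt by simp
      next
        case 2 then have "al s \<le> al t" using mono sp by simp
        moreover have "s^2 < t^2" using 2 sp by (simp add: power_strict_mono)
        ultimately show False using als alt by simp
      qed
    qed
  qed
qed


lemma pw_cont:
  fixes P Q :: "real \<Rightarrow> real"
  assumes "continuous_on UNIV P" "continuous_on UNIV Q" "P 0 = Q 0"
  shows "continuous_on UNIV (\<lambda>x. if x \<le> 0 then P x else Q x)"
proof -
  have "continuous_on UNIV (\<lambda>x. if id x \<le> 0 then P x else Q x)"
    by (rule continuous_on_cases_le) (use assms in \<open>auto intro: continuous_on_subset continuous_on_id\<close>)
  then show ?thesis by simp
qed

lemma pw_H01:
  fixes P Q P' Q' :: "real \<Rightarrow> real"
  assumes cP: "continuous_on UNIV P" and cQ: "continuous_on UNIV Q"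
    and cP': "continuous_on UNIV P'" and cQ': "continuous_on UNIV Q'"
    and e0: "P 0 = Q 0" and e1: "P' 0 = Q' 0"
    and dP: "\<And>x. (P has_real_derivative P' x) (at x)"
    and dQ: "\<And>x. (Q has_real_derivative Q' x) (at x)"
    and b1: "P (-1) = 0" and b2: "Q 1 = 0"
  shows "H01 (\<lambda>x. if x \<le> 0 then P x else Q x) (\<lambda>x. if x \<le> 0 then P' x else Q' x)"
proof -
  define F where "F x = (if x \<le> 0 then P x else Q x)" for x
  define f where "f x = (if x \<le> 0 then P' x else Q' x)" for x
  have cF: "continuous_on UNIV F" unfolding F_def by (rule pw_cont[OF cP cQ e0])
  have cf: "continuous_on UNIV f" unfolding f_def by (rule pw_cont[OF cP' cQ' e1])
  have dF: "(F has_vector_derivative f x) (at x)" if "x \<noteq> 0" for x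
  proof (cases "x < 0")
    case True
    have "(F has_real_derivative P' x) (at x)"
      by (rule has_field_derivative_transform_within_open[OF dP, of "{..<0}"]) (use True in \<open>auto simp: F_def\<close>)
    then show ?thesis using True by (simp add: has_real_derivative_iff_has_vector_derivative f_def)
  next
    case False
    then have x: "x > 0" using that by simp
    have "(F has_real_derivative Q' x) (at x)"
      by (rule has_field_derivative_transform_within_open[OF dQ, of "{0<..}"]) (use x in \<open>auto simp: F_def\<close>)
    then show ?thesis using x by (simp add: has_real_derivative_iff_has_vector_derivative f_def)
  qed
  have main: "F x = (LBINT t:{-1..x}. f t)" if x: "x \<in> {-1..1}" for x
  proof -
    have "(f has_integral (F x - F (-1))) {-1..x}"
      by (rule fundamental_theorem_of_calculus_interior_strong[of "{0}"])
         (use x dF in \<open>auto intro: continuous_on_subset[OF cF]\<close>)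
    then have "integral {-1..x} f = F x" using b1 by (simp add: F_def integral_unique)
    moreover have "set_integrable lborel {-1..x} f"
      unfolding set_integrable_def by (rule borel_integrable_compact) (auto intro: continuous_on_subset[OF cf])
    ultimately show ?thesis using set_borel_integral_eq_integral(2) by metis
  qed
  have "set_borel_measurable lborel {-1..1} f"
    unfolding smeas_iff by (rule cont_meas) (rule continuous_on_subset[OF cf], simp)
  moreover have "set_integrable lborel {-1..1} (\<lambda>x. (f x)^2)"
    by (rule cont_sint) (intro continuous_intros continuous_on_subset[OF cf], simp)
  moreover have "F 1 = 0" using b2 by (simp add: F_def)
  ultimately show ?thesis unfolding H01_def F_def[symmetric] f_def[symmetric] using main by blast
qed


lemma pow_aux: "real k * y^(k - Suc 0) * (y::real) = real k * y^k"
  by (cases k) auto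

lemma frac_aux: "(- a - real k * a) / (real k + 1) = - (a::real)"
proof -
  have "- a - real k * a = - a * (real k + 1)" by (simp add: algebra_simps)
  then show ?thesis by simp
qed

lemma frac_aux2: "(a + real k * a) / (real k + 1) = (a::real)"
proof -
  have "a + real k * a = a * (real k + 1)" by (simp add: algebra_simps)
  then show ?thesis by simp
qed

lemma pow_aux2: "real k * (-x)^(k - Suc 0) * (x::real) = - (real k * (-x)^k)"
  using pow_aux[of k "-x"] by simp

lemma dP0: "((\<lambda>x::real. (1+x) - (1+x)^(k+1)/(real k + 1) - (1 - (-x)^(k+1))/(real k + 1)) has_real_derivative
     (1 - (1+x)^k - (-x)^k)) (at x)"
  apply (auto intro!: derivative_eq_intros simp: pow_aux pow_aux2 frac_aux frac_aux2)
  done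

lemma dQ0: "((\<lambda>x::real. (1-x) - (1-x)^(k+1)/(real k + 1) - (1 - x^(k+1))/(real k + 1)) has_real_derivative
     (-(1 - (1-x)^k - x^k))) (at x)"
  by (auto intro!: derivative_eq_intros simp: pow_aux frac_aux)

lemma dP1: "((\<lambda>x::real. 1 - (1+x)^k - (-x)^k) has_real_derivative
     (k * ((-x)^(k-1) - (1+x)^(k-1)))) (at x)"
  by (auto intro!: derivative_eq_intros simp: field_simps)

lemma dQ1: "((\<lambda>x::real. -(1 - (1-x)^k - x^k)) has_real_derivative
     (k * (x^(k-1) - (1-x)^(k-1)))) (at x)"
  by (auto intro!: derivative_eq_intros simp: field_simps)

lemma uv_bound:
  fixes u v :: real
  assumes "0 \<le> u" "0 \<le> v" "u + v = 1" "k \<ge> 1"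
  shows "(1 - u^k - v^k)^2 \<le> 1"
proof -
  have u1: "u \<le> 1" "v \<le> 1" using assms by auto
  have "u^k \<le> u" using power_decreasing[of 1 k u] assms u1 by simp
  moreover have "v^k \<le> v" using power_decreasing[of 1 k v] assms u1 by simp
  moreover have "0 \<le> u^k" "0 \<le> v^k" using assms by auto
  ultimately have a: "0 \<le> 1 - u^k - v^k \<and> 1 - u^k - v^k \<le> 1" using assms by linarith
  have "(1 - u^k - v^k)^2 \<le> 1^2" by (rule power_mono) (use a in auto)
  then show ?thesis by simp
qed

lemma gen_frac: "(a::real) \<noteq> 0 \<Longrightarrow> 1 - 1/a - 1/a = (a - 2)/a"
  by (simp add: field_simps)

lemma family:
  assumes k: "k \<ge> (2::nat)"
  shows "\<exists>psi d1 d2. H02 psi d1 d2 \<and> psi 0 = (real k - 1) / (real k + 1)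
            \<and> (LBINT x:{-1..1}. (d1 x)^2) \<le> 2"
proof -
  define P0 where "P0 = (\<lambda>x::real. (1+x) - (1+x)^(k+1)/(real k + 1) - (1 - (-x)^(k+1))/(real k + 1))"
  define Q0 where "Q0 = (\<lambda>x::real. (1-x) - (1-x)^(k+1)/(real k + 1) - (1 - x^(k+1))/(real k + 1))"
  define P1 where "P1 = (\<lambda>x::real. 1 - (1+x)^k - (-x)^k)"
  define Q1 where "Q1 = (\<lambda>x::real. -(1 - (1-x)^k - x^k))"
  define P2 where "P2 = (\<lambda>x::real. k * ((-x)^(k-1) - (1+x)^(k-1)))"
  define Q2 where "Q2 = (\<lambda>x::real. k * (x^(k-1) - (1-x)^(k-1)))"
  define psi where "psi x = (if x \<le> 0 then P0 x else Q0 x)" for x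
  define d1 where "d1 x = (if x \<le> 0 then P1 x else Q1 x)" for x
  define d2 where "d2 x = (if x \<le> 0 then P2 x else Q2 x)" for x
  have k1: "k - 1 \<noteq> 0" "k \<noteq> 0" using k by auto
  have dp0: "\<And>x. (P0 has_real_derivative P1 x) (at x)" unfolding P0_def P1_def by (rule dP0)
  have dq0: "\<And>x. (Q0 has_real_derivative Q1 x) (at x)" unfolding Q0_def Q1_def by (rule dQ0)
  have dp1: "\<And>x. (P1 has_real_derivative P2 x) (at x)" unfolding P1_def P2_def by (rule dP1)
  have dq1: "\<And>x. (Q1 has_real_derivative Q2 x) (at x)" unfolding Q1_def Q2_def by (rule dQ1)
  have h1: "H01 psi d1" unfolding psi_def d1_def
    by (rule pw_H01[OF _ _ _ _ _ _ dp0 dq0]) (use k1 in \<open>auto simp: P0_def Q0_def P1_def Q1_def intro!: continuous_intros\<close>)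
  have h2: "H01 d1 d2" unfolding d1_def d2_def
    by (rule pw_H01[OF _ _ _ _ _ _ dp1 dq1]) (use k1 in \<open>auto simp: P1_def Q1_def P2_def Q2_def intro!: continuous_intros\<close>)
  have "H02 psi d1 d2" using h1 h2 by (simp add: H02_def)
  moreover have "psi 0 = (real k - 1) / (real k + 1)"
  proof -
    have "psi 0 = 1 - 1 / (real k + 1) - 1 / (real k + 1)" using k by (simp add: psi_def P0_def)
    also have "\<dots> = ((real k + 1) - 2) / (real k + 1)" by (rule gen_frac) simp
    also have "(real k + 1) - 2 = real k - 1" by simp
    finally show ?thesis .
  qed
  moreover have "(LBINT x:{-1..1}. (d1 x)^2) \<le> 2"
  proof -
    have "(LBINT x:{-1..1}. (d1 x)^2) \<le> (LBINT x:{-1..1::real}. (1::real))"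
    proof (rule set_integral_mono)
      show "set_integrable lborel {-1..1} (\<lambda>x. (d1 x)^2)" using H01_facts(2)[OF h1] .
      show "set_integrable lborel {-1..1::real} (\<lambda>x. 1::real)" by (rule set_integrable_const_Icc)
      fix x :: real assume x: "x \<in> {-1..1}"
      show "(d1 x)^2 \<le> 1"
      proof (cases "x \<le> 0")
        case True
        then show ?thesis using x k uv_bound[of "1+x" "-x" k] by (simp add: d1_def P1_def)
      next
        case False
        then have "(d1 x)^2 = (1 - (1-x)^k - x^k)^2" by (simp add: d1_def Q1_def power2_eq_square algebra_simps)
        then show ?thesis using x k uv_bound[of "1-x" "x" k] False by simp
      qed
    qed
    also have "\<dots> = 2" by (simp add: set_integral_const)
    finally show ?thesis .
  qed
  ultimately show ?thesis by blast
qed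


lemma choose_k:
  assumes "0 \<le> \<theta>" "\<theta> < 1"
  shows "\<exists>k::nat. k \<ge> 2 \<and> \<theta> < ((real k - 1) / (real k + 1))^2"
proof -
  obtain n :: nat where n: "4 / (1 - \<theta>) < real n" using reals_Archimedean2 by blast
  define k where "k = n + 2"
  define t where "t = 2 / (real k + 1)"
  have e: "0 < 1 - \<theta>" using assms by simp
  have "4 / (1 - \<theta>) < real k + 1" using n by (simp add: k_def)
  then have "4 < (real k + 1) * (1 - \<theta>)" using e by (simp add: field_simps)
  then have tl: "t < (1 - \<theta>) / 2" unfolding t_def by (simp add: field_simps)
  have q: "(real k - 1) / (real k + 1) = 1 - t" unfolding t_def by (simp add: field_simps)
  have "0 \<le> t^2" by simp
  then have "1 - 2 * t \<le> (1 - t)^2" by (simp add: power2_eq_square algebra_simps)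
  moreover have "2 * t < 1 - \<theta>" using tl by simp
  ultimately have "\<theta> < (1 - t)^2" by linarith
  moreover have "k \<ge> 2" by (simp add: k_def)
  ultimately show ?thesis using q by metis
qed

lemma Bc2_le:
  assumes "g > 0" "rm < rp"
  shows "Bc2 g rp rm \<le> g * (rp - rm) / 2"
  unfolding Bc2_def
proof (rule cSup_least)
  obtain psi d1 d2 where f: "H02 psi d1 d2" "psi 0 = (real 2 - 1) / (real 2 + 1)"
    using family[of 2] by auto
  then have "H01 psi d1 \<and> (\<exists>x\<in>{-1<..<1}. psi x \<noteq> 0)" by (auto simp: H02_def intro!: bexI[of _ 0])
  then show "{g * (rp - rm) * (psi 0)\<^sup>2 / (LBINT x:{-1..1}. (d1 x)\<^sup>2) | psi d1.
            H01 psi d1 \<and> (\<exists>x\<in>{-1<..<1}. psi x \<noteq> 0)} \<noteq> {}" by blast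
next
  fix r assume "r \<in> {g * (rp - rm) * (psi 0)\<^sup>2 / (LBINT x:{-1..1}. (d1 x)\<^sup>2) | psi d1.
            H01 psi d1 \<and> (\<exists>x\<in>{-1<..<1}. psi x \<noteq> 0)}"
  then obtain psi d1 where r: "r = g * (rp - rm) * (psi 0)\<^sup>2 / (LBINT x:{-1..1}. (d1 x)\<^sup>2)"
    and h: "H01 psi d1" by blast
  have i: "2 * (psi 0)^2 \<le> (LBINT x:{-1..1}. (d1 x)^2)" by (rule H01_psi0(1)[OF h])
  have gR: "0 < g * (rp - rm)" using assms by simp
  show "r \<le> g * (rp - rm) / 2"
  proof (cases "(LBINT x:{-1..1}. (d1 x)^2) = 0")
    case True then show ?thesis using r gR by simp
  next
    case False
    then have pos: "0 < (LBINT x:{-1..1}. (d1 x)^2)" using i by (metis zero_le_power2 order_le_less mult_nonneg_nonneg zero_le_numeral order_trans)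
    have "g * (rp - rm) * (psi 0)^2 \<le> g * (rp - rm) / 2 * (LBINT x:{-1..1}. (d1 x)^2)"
      using mult_left_mono[OF i, of "g * (rp - rm)"] gR by (simp add: field_simps)
    then show ?thesis unfolding r using pos by (simp add: pos_divide_le_eq)
  qed
qed

theorem lemma3p7:
  fixes g rp rm mp mm xi :: real and B :: "'a::real_normed_vector"
  assumes "g > 0" and "rm > 0" and "rp > rm" and "mp > 0" and "mm > 0" and "B \<noteq> 0"
    and "norm B < sqrt (Bc2 g rp rm)"
    and "\<bar>xi\<bar> > sqrt (xivc2 g rp rm (norm B))"
  shows "\<exists>!s. s \<in> {s. s > 0 \<and> alpha g rp rm mp mm (norm B) xi s < 0}
              \<and> s = sqrt (- alpha g rp rm mp mm (norm B) xi s)"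
proof -
  define b where "b = norm B"
  have bp: "0 < b" using assms(6) by (simp add: b_def)
  have gR: "0 < g * (rp - rm)" using assms by simp
  have "0 < sqrt (Bc2 g rp rm)" using assms(7) bp b_def by linarith
  then have "0 < Bc2 g rp rm" by simp
  have "b^2 < (sqrt (Bc2 g rp rm))^2"
    using assms(7) bp unfolding b_def[symmetric] by (intro power_strict_mono) auto
  then have "b^2 < Bc2 g rp rm" using \<open>0 < Bc2 g rp rm\<close> by simp
  then have b2: "b^2 < g * (rp - rm) / 2" using Bc2_le[OF assms(1,3)] by linarith
  define \<theta> where "\<theta> = 2 * b^2 / (g * (rp - rm))"
  have "0 \<le> \<theta>" "\<theta> < 1" using b2 gR by (auto simp: \<theta>_def field_simps)
  then obtain k :: nat where k: "k \<ge> 2" "\<theta> < ((real k - 1) / (real k + 1))^2"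
    using choose_k by blast
  obtain psi1 d11 d21 where f: "H02 psi1 d11 d21" "psi1 0 = (real k - 1) / (real k + 1)"
    "(LBINT x:{-1..1}. (d11 x)^2) \<le> 2" using family[OF k(1)] by blast
  have "2 * b^2 < g * (rp - rm) * (psi1 0)^2" using k(2) gR unfolding f(2) \<theta>_def
    by (simp add: field_simps)
  moreover have "b^2 * (LBINT x:{-1..1}. (d11 x)^2) \<le> b^2 * 2"
    using f(3) by (intro mult_left_mono) auto
  ultimately have D1: "g * (rp - rm) * (psi1 0)^2 - b^2 * (LBINT x:{-1..1}. (d11 x)^2) > 0" by linarith
  define SX where "SX = {b\<^sup>2 * (LBINT x:{-1..1}. (d2 x)\<^sup>2) /
            (g * (rp - rm) * (psi 0)\<^sup>2 - b\<^sup>2 * (LBINT x:{-1..1}. (d1 x)\<^sup>2)) | psi d1 d2.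
            H02 psi d1 d2 \<and>
            g * (rp - rm) * (psi 0)\<^sup>2 - b\<^sup>2 * (LBINT x:{-1..1}. (d1 x)\<^sup>2) > 0}"
  have SXne: "SX \<noteq> {}" unfolding SX_def using f(1) D1 by blast
  have "sqrt (xivc2 g rp rm b) < sqrt (xi^2)" using assms(8) by (simp add: b_def)
  then have "xivc2 g rp rm b < xi^2" by (simp only: real_sqrt_less_iff)
  then have "Inf SX < xi^2" unfolding SX_def xivc2_def .
  then obtain r where "r \<in> SX" "r < xi^2" using cInf_lessD[OF SXne] by blast
  then obtain psi d1 d2 where T: "H02 psi d1 d2"
    and Dp: "g * (rp - rm) * (psi 0)\<^sup>2 - b\<^sup>2 * (LBINT x:{-1..1}. (d1 x)\<^sup>2) > 0"
    and rl: "b\<^sup>2 * (LBINT x:{-1..1}. (d2 x)\<^sup>2) /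
            (g * (rp - rm) * (psi 0)\<^sup>2 - b\<^sup>2 * (LBINT x:{-1..1}. (d1 x)\<^sup>2)) < xi^2"
    unfolding SX_def by blast
  define D where "D = g * (rp - rm) * (psi 0)\<^sup>2 - b\<^sup>2 * (LBINT x:{-1..1}. (d1 x)\<^sup>2)"
  have rl': "b\<^sup>2 * (LBINT x:{-1..1}. (d2 x)\<^sup>2) < xi^2 * D"
    using rl Dp unfolding D_def[symmetric] by (simp add: pos_divide_less_eq)
  have h1: "H01 psi d1" and h2: "H01 d1 d2" using T by (auto simp: H02_def)
  have "(LBINT x:{-1..1}. b\<^sup>2 * (xi\<^sup>2 * (d1 x)\<^sup>2 + (d2 x)\<^sup>2))
      = b^2 * (xi^2 * (LBINT x:{-1..1}. (d1 x)\<^sup>2) + (LBINT x:{-1..1}. (d2 x)\<^sup>2))"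
    using set_integral_add(2)[OF set_integrable_mult_right[OF H01_facts(2)[OF h1], of "xi^2"] H01_facts(2)[OF h2]]
    by simp
  then have E0v: "2 * E0 g rp rm b xi psi d1 d2 = b\<^sup>2 * (LBINT x:{-1..1}. (d2 x)\<^sup>2) - xi^2 * D"
    unfolding E0_def D_def by (simp add: algebra_simps) (simp add: field_simps)
  have E0n: "E0 g rp rm b xi psi d1 d2 < 0" using rl' E0v by simp
  have "0 \<le> (LBINT x:{-1..1}. (d1 x)\<^sup>2)" by (rule set_integral_nonneg') simp
  then have "0 \<le> b\<^sup>2 * (LBINT x:{-1..1}. (d1 x)\<^sup>2)" by simp
  then have "0 < g * (rp - rm) * (psi 0)\<^sup>2" using Dp by linarith
  then have p0: "psi 0 \<noteq> 0" by auto
  define j where "j = Jf rp rm xi psi d1"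
  have jp: "0 < j" unfolding j_def by (rule Jf_pos[OF T assms(2,3) p0])
  define c where "c = 1 / sqrt j"
  have c2: "c^2 * j = 1" using jp by (simp add: c_def power_divide)
  define Tw where "Tw = ((\<lambda>x. c * psi x), (\<lambda>x. c * d1 x), (\<lambda>x. c * d2 x))"
  define M where "M = {(p, e1, e2). H02 p e1 e2 \<and> Jf rp rm xi p e1 = 1}"
  define F where "F = (\<lambda>(p, e1, e2) s. Es g rp rm mp mm b xi s p e1 e2)"
  have "\<exists>!s. s \<in> {s. s > 0 \<and> alpha g rp rm mp mm b xi s < 0} \<and> s = sqrt (- alpha g rp rm mp mm b xi s)"
  proof (rule abstract_main[where F=F and M=M and K="xi^2 * g * (rp - rm) / rm" and Tw=Tw])
    fix s :: real assume "s > 0"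
    show "alpha g rp rm mp mm b xi s = Inf ((\<lambda>T. F T s) ` M)"
      unfolding alpha_def by (rule arg_cong[where f=Inf]) (auto simp: F_def M_def image_def)
  next
    fix T assume "T \<in> M"
    then obtain p e1 e2 where "T = (p, e1, e2)" "H02 p e1 e2" unfolding M_def by auto
    then have "Acoef mp mm xi p e1 e2 \<ge> 0 \<and> (\<forall>s::real. F T s = s * Acoef mp mm xi p e1 e2 + E0 g rp rm b xi p e1 e2)"
      using Es_affine[of p e1 e2] Acoef_nonneg[OF assms(4,5), of xi p e1 e2] unfolding F_def by auto
    then show "\<exists>A E. A \<ge> 0 \<and> (\<forall>s::real. F T s = s * A + E)" by blast
  next
    fix T and s :: real assume "T \<in> M" "0 < s"
    then obtain p e1 e2 where "T = (p, e1, e2)" "H02 p e1 e2" "Jf rp rm xi p e1 = 1" unfolding M_def by auto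
    then have "- (xi^2 * g * (rp - rm) / rm) \<le> Es g rp rm mp mm b xi s p e1 e2"
      using Es_lower[OF _ assms(1,2,3,4,5), of p e1 e2 s xi b] \<open>0 < s\<close> by simp
    then show "- (xi^2 * g * (rp - rm) / rm) \<le> F T s"
      unfolding F_def \<open>T = (p, e1, e2)\<close> by simp
  next
    have "Jf rp rm xi (\<lambda>x. c * psi x) (\<lambda>x. c * d1 x) = 1"
      unfolding Jf_scale using c2 j_def by simp
    then show "Tw \<in> M" unfolding Tw_def M_def using H02_scale[OF T, of c] by simp
  next
    fix s :: real
    show "F Tw s = s * (c^2 * Acoef mp mm xi psi d1 d2) + c^2 * E0 g rp rm b xi psi d1 d2"
    proof -
      have "F Tw s = c^2 * Es g rp rm mp mm b xi s psi d1 d2"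
        unfolding F_def Tw_def by (simp only: Es_scale prod.case)
      also have "\<dots> = c^2 * (s * Acoef mp mm xi psi d1 d2 + E0 g rp rm b xi psi d1 d2)"
        by (simp only: Es_affine[OF T])
      finally show ?thesis by (simp only: distrib_left mult.left_commute)
    qed
  next
    show "0 \<le> c^2 * Acoef mp mm xi psi d1 d2" using Acoef_nonneg[OF assms(4,5)] by simp
  next
    have "c \<noteq> 0" using c2 by auto
    then have "0 < c^2" by simp
    then show "c^2 * E0 g rp rm b xi psi d1 d2 < 0" using E0n by (simp add: mult_pos_neg)
  qed
  then show ?thesis by (simp add: b_def)
qed

end
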